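(* Let $[\cdot,\cdot]$ be a Gerstenhaber superbracket on $\Omega(\mathcal A)$. Then $(\Omega(\mathcal A),\wedge,[\cdot,\cdot])$ is a differential Gerstenhaber superalgebra if and only if there is a Poisson superalgebra structure $\{\cdot,\cdot\}$ on $\mathcal A$ such that $[\cdot,\cdot]$ is the bracket associated to it, i.e. $[f,g]=0$, $[f,\mathbf d g]=[\mathbf d f,g]=\{f,g\}$ and $[\mathbf d f,\mathbf d g]=\mathbf d\{f,g\}$ for all $f,g\in\mathcal A$. (In the forward direction one may take $\{f,g\}:=[f,\mathbf d g]$.)
   Context: $\mathcal A$ is a $\mathbb Z$-graded, associative, graded-commutative unital real algebra, regarded as supercommutative with parity $p$ = degree mod 2. $\Omega^1(\mathcal A)=\ker(\mathbf m:\mathcal A\otimes\mathcal A\to\mathcal A)$ with $\mathbf d a=a\otimes1-1\otimes a$, generated over $\mathcal A$ by $\mathbf d\mathcal A$; $\Omega(\mathcal A)=\bigoplus_{r\ge0}\Omega^r(\mathcal A)$, $\Omega^0(\mathcal A)=\mathcal A$, is the algebra of superforms generated over $\mathcal A$ by $\Omega^1(\mathcal A)$ with wedge product, bigraded by form degree $\deg$ and parity $p$, and $\mathbf d$ extends to the exterior superderivative ($\deg$ $1$, $\mathbf d^2=0$). A Gerstenhaber superbracket on $\Omega(\mathcal A)$ is a bracket such that for bihomogeneous $\alpha,\beta,\gamma$: $[\alpha,\beta]=-(-1)^{(\deg\alpha-1)(\deg\beta-1)+p(\alpha)p(\beta)}[\beta,\alpha]$; $[\alpha,[\beta,\gamma]]=[[\alpha,\beta],\gamma]+(-1)^{(\deg\alpha-1)(\deg\beta-1)+p(\alpha)p(\beta)}[\beta,[\alpha,\gamma]]$;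 $[\alpha,\beta\wedge\gamma]=[\alpha,\beta]\wedge\gamma+(-1)^{(\deg\alpha-1)\deg\beta+p(\alpha)p(\beta)}\beta\wedge[\alpha,\gamma]$. It is differential if $\mathbf d[\alpha,\beta]=[\mathbf d\alpha,\beta]+(-1)^{\deg\alpha-1}[\alpha,\mathbf d\beta]$ for all $\alpha,\beta$. A Poisson superalgebra structure on $\mathcal A$ is a bilinear bracket homogeneous of even degree satisfying, for homogeneous $f,g,h$: $\{f,g\}=-(-1)^{p(f)p(g)}\{g,f\}$, $\{f,\{g,h\}\}=\{\{f,g\},h\}+(-1)^{p(f)p(g)}\{g,\{f,h\}\}$, $\{f,gh\}=\{f,g\}h+(-1)^{p(f)p(g)}g\{f,h\}$.
   Formalization: Homogeneous of even degree, for a Poisson superalgebra structure, means parity-preserving only: $\{f,g\}$ has parity $p(f)+p(g)$ mod 2 for homogeneous f, g; a Gerstenhaber superbracket is also bilinear, of form degree $-1$ and of even parity. Each condition added here is assumed in the paper as well or is needed for the statement above to hold. *)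

theory Defs
  imports "HOL-Analysis.Analysis"
begin

definition eps :: "int \<Rightarrow> real" where
  "eps k = (if even k then 1 else -1)"

definition par :: "int \<Rightarrow> nat" where
  "par n = nat (n mod 2)"

text \<open>Z-graded, associative, graded-commutative unital real algebra, given by its
  homogeneous components Agr n (a direct-sum decomposition of the carrier type).\<close>
definition graded_comm_algebra :: "(int \<Rightarrow> 'a::real_algebra_1 set) \<Rightarrow> bool" where
  "graded_comm_algebra Agr \<longleftrightarrow>
     (\<forall>n. subspace (Agr n)) \<and>
     (\<forall>a. \<exists>!c::int \<Rightarrow> 'a. finite {n. c n \<noteq> 0} \<and> (\<forall>n. c n \<in> Agr n) \<and>
            a = (\<Sum>n\<in>{n. c n \<noteq> 0}. c n)) \<and>
     1 \<in> Agr 0 \<and>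
     (\<forall>m n a b. a \<in> Agr m \<longrightarrow> b \<in> Agr n \<longrightarrow>
        a * b \<in> Agr (m + n) \<and> a * b = eps (m * n) *\<^sub>R (b * a))"

definition Apar :: "(int \<Rightarrow> 'a::real_algebra_1 set) \<Rightarrow> nat \<Rightarrow> 'a set" where
  "Apar Agr p = span (\<Union>n\<in>{n. par n = p}. Agr n)"

definition gen_form :: "('w \<Rightarrow> 'w \<Rightarrow> 'w) \<Rightarrow> 'w \<Rightarrow> ('a \<Rightarrow> 'w) \<Rightarrow> ('w \<Rightarrow> 'w)
    \<Rightarrow> 'a \<Rightarrow> 'a list \<Rightarrow> 'w" where
  "gen_form wedge one iota d a0 as =
     wedge (iota a0) (foldr (\<lambda>a w. wedge (d (iota a)) w) as one)"

text \<open>The algebra of superforms Omega(A) with wedge product, unit, bigrading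
  Om r p (form degree r, parity p), embedding iota of A = Omega^0 and exterior
  superderivative d; Omega(A) is generated over A by dA.\<close>
definition superform_algebra ::
  "(int \<Rightarrow> 'a::real_algebra_1 set) \<Rightarrow> ('w::real_vector \<Rightarrow> 'w \<Rightarrow> 'w) \<Rightarrow> 'w \<Rightarrow>
   (nat \<Rightarrow> nat \<Rightarrow> 'w set) \<Rightarrow> ('a \<Rightarrow> 'w) \<Rightarrow> ('w \<Rightarrow> 'w) \<Rightarrow> bool" where
  "superform_algebra Agr wedge one Om iota d \<longleftrightarrow>
     (\<forall>x. linear (wedge x)) \<and> (\<forall>y. linear (\<lambda>x. wedge x y)) \<and>
     (\<forall>x y z. wedge (wedge x y) z = wedge x (wedge y z)) \<and>
     (\<forall>x. wedge one x = x \<and> wedge x one = x) \<and>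
     (\<forall>r p. subspace (Om r p)) \<and> (\<forall>r p. 2 \<le> p \<longrightarrow> Om r p = {0}) \<and>
     (\<forall>x. \<exists>!c::nat \<times> nat \<Rightarrow> 'w. finite {rp. c rp \<noteq> 0} \<and>
            (\<forall>r p. c (r, p) \<in> Om r p) \<and> x = (\<Sum>rp\<in>{rp. c rp \<noteq> 0}. c rp)) \<and>
     (\<forall>r p s q x y. p < 2 \<longrightarrow> q < 2 \<longrightarrow> x \<in> Om r p \<longrightarrow> y \<in> Om s q \<longrightarrow>
        wedge x y \<in> Om (r + s) ((p + q) mod 2) \<and>
        wedge x y = eps (int r * int s + int p * int q) *\<^sub>R wedge y x) \<and>
     linear iota \<and> inj iota \<and> iota 1 = one \<and>
     (\<forall>a b. iota (a * b) = wedge (iota a) (iota b)) \<and>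
     (\<forall>n. iota ` Agr n \<subseteq> Om 0 (par n)) \<and> (\<forall>p. Om 0 p \<subseteq> range iota) \<and>
     linear d \<and> (\<forall>r p. d ` Om r p \<subseteq> Om (Suc r) p) \<and> (\<forall>x. d (d x) = 0) \<and>
     (\<forall>r p x y. p < 2 \<longrightarrow> x \<in> Om r p \<longrightarrow>
        d (wedge x y) = wedge (d x) y + eps (int r) *\<^sub>R wedge x (d y)) \<and>
     UNIV = span (range (\<lambda>(a0, as). gen_form wedge one iota d a0 as))"

definition bihom :: "(nat \<Rightarrow> nat \<Rightarrow> 'w set) \<Rightarrow> nat \<Rightarrow> nat \<Rightarrow> 'w \<Rightarrow> bool" where
  "bihom Om r p x \<longleftrightarrow> p < 2 \<and> x \<in> Om r p"

definition gerstenhaber_superbracket ::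
  "(nat \<Rightarrow> nat \<Rightarrow> 'w::real_vector set) \<Rightarrow> ('w \<Rightarrow> 'w \<Rightarrow> 'w) \<Rightarrow> ('w \<Rightarrow> 'w \<Rightarrow> 'w) \<Rightarrow> bool" where
  "gerstenhaber_superbracket Om wedge br \<longleftrightarrow>
     (\<forall>x. linear (br x)) \<and> (\<forall>y. linear (\<lambda>x. br x y)) \<and>
     (\<forall>r p s q x y. bihom Om r p x \<longrightarrow> bihom Om s q y \<longrightarrow>
        (if r + s = 0 then br x y = 0 else br x y \<in> Om (r + s - 1) ((p + q) mod 2))) \<and>
     (\<forall>r p s q x y. bihom Om r p x \<longrightarrow> bihom Om s q y \<longrightarrow>
        br x y = - (eps ((int r - 1) * (int s - 1) + int p * int q) *\<^sub>R br y x)) \<and>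
     (\<forall>r p s q t u x y z. bihom Om r p x \<longrightarrow> bihom Om s q y \<longrightarrow> bihom Om t u z \<longrightarrow>
        br x (br y z) = br (br x y) z
          + eps ((int r - 1) * (int s - 1) + int p * int q) *\<^sub>R br y (br x z)) \<and>
     (\<forall>r p s q t u x y z. bihom Om r p x \<longrightarrow> bihom Om s q y \<longrightarrow> bihom Om t u z \<longrightarrow>
        br x (wedge y z) = wedge (br x y) z
          + eps ((int r - 1) * int s + int p * int q) *\<^sub>R wedge y (br x z))"

definition differential_bracket ::
  "(nat \<Rightarrow> nat \<Rightarrow> 'w::real_vector set) \<Rightarrow> ('w \<Rightarrow> 'w) \<Rightarrow> ('w \<Rightarrow> 'w \<Rightarrow> 'w) \<Rightarrow> bool" where
  "differential_bracket Om d br \<longleftrightarrow>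
     (\<forall>r p s q x y. bihom Om r p x \<longrightarrow> bihom Om s q y \<longrightarrow>
        d (br x y) = br (d x) y + eps (int r - 1) *\<^sub>R br x (d y))"

definition poisson_superalgebra ::
  "(int \<Rightarrow> 'a::real_algebra_1 set) \<Rightarrow> ('a \<Rightarrow> 'a \<Rightarrow> 'a) \<Rightarrow> bool" where
  "poisson_superalgebra Agr P \<longleftrightarrow>
     (\<forall>f. linear (P f)) \<and> (\<forall>g. linear (\<lambda>f. P f g)) \<and>
     (\<forall>m n f g. f \<in> Agr m \<longrightarrow> g \<in> Agr n \<longrightarrow> P f g \<in> Apar Agr (par (m + n))) \<and>
     (\<forall>m n f g. f \<in> Agr m \<longrightarrow> g \<in> Agr n \<longrightarrow> P f g = - (eps (m * n) *\<^sub>R P g f)) \<and>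
     (\<forall>m n k f g h. f \<in> Agr m \<longrightarrow> g \<in> Agr n \<longrightarrow> h \<in> Agr k \<longrightarrow>
        P f (P g h) = P (P f g) h + eps (m * n) *\<^sub>R P g (P f h)) \<and>
     (\<forall>m n k f g h. f \<in> Agr m \<longrightarrow> g \<in> Agr n \<longrightarrow> h \<in> Agr k \<longrightarrow>
        P f (g * h) = P f g * h + eps (m * n) *\<^sub>R (g * P f h))"

end

theory Submission
  imports Defs
begin


lemma eps_add: "eps (a + b) = eps a * eps b"
  by (auto simp: eps_def)
lemma eps_sq: "eps a * eps a = 1" by (simp add: eps_def)
lemma eps_nz: "eps a \<noteq> 0" by (simp add: eps_def)
lemma eps_par: "eps (m * n) = eps (int (par m) * int (par n))"
  by (simp add: eps_def par_def even_mult_iff)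

lemma S1: "eps (int r + int s - 1) = eps (int r - 1) * eps (int s)"
  by (auto simp: eps_def)
lemma S2: "eps ((int r - 1) * int s + int p * int q) = eps (int r - 1) * eps ((int r - 1) * (int s + 1) + int p * int q)"
  by (auto simp: eps_def even_mult_iff)
lemma S3: "eps ((int r - 1) * int s + int p * int q) * eps (int s) = eps (int r * int s + int p * int q)"
  by (auto simp: eps_def even_mult_iff)
lemma S4: "eps ((int r - 1) * (int s - 1) + int p * int q) * eps (int s - 1) = eps (int r * (int s - 1) + int p * int q)"
  by (auto simp: eps_def even_mult_iff)
lemma S5: "eps ((int r - 1) * (int s - 1) + int p * int q) = eps (int r - 1) * eps ((int r - 1) * int s + int p * int q)"
  by (auto simp: eps_def even_mult_iff)



lemma bilin_span:
  fixes B :: "'a::real_vector \<Rightarrow> 'b::real_vector \<Rightarrow> 'c::real_vector"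
  assumes l1: "\<And>x. linear (B x)" and l2: "\<And>y. linear (\<lambda>x. B x y)"
    and x: "x \<in> span X" and y: "y \<in> span Y" and S: "subspace S"
    and XY: "\<And>a b. a \<in> X \<Longrightarrow> b \<in> Y \<Longrightarrow> B a b \<in> S"
  shows "B x y \<in> S"
proof -
  have A: "B a y \<in> S" if "a \<in> X" for a
  proof -
    have "subspace {y. B a y \<in> S}"
      using linear_subspace_vimage[OF l1 S] by (simp add: vimage_def)
    then show ?thesis using span_induct[OF y, of "\<lambda>y. B a y \<in> S"] XY that by blast
  qed
  have "subspace {x. B x y \<in> S}"
    using linear_subspace_vimage[OF l2 S] by (simp add: vimage_def)
  then show ?thesis using span_induct[OF x, of "\<lambda>x. B x y \<in> S"] A by blast
qed

lemma linear_via_inj: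
  assumes li: "linear iota" and ii: "inj iota" and L: "linear L" and h: "\<And>x. iota (h x) = L x"
  shows "linear h"
proof (rule linearI)
  fix a b show "h (a + b) = h a + h b"
    using h[of "a+b"] h[of a] h[of b] linear_add[OF L] linear_add[OF li] ii
    by (metis injD)
next
  fix c a show "h (c *\<^sub>R a) = c *\<^sub>R h a"
    using h[of "c *\<^sub>R a"] h[of a] linear_scale[OF L] linear_scale[OF li] ii
    by (metis injD)
qed

locale GS =
  fixes Agr :: "int \<Rightarrow> 'a::real_algebra_1 set"
    and wedge :: "'w::real_vector \<Rightarrow> 'w \<Rightarrow> 'w" and one :: 'w
    and Om :: "nat \<Rightarrow> nat \<Rightarrow> 'w set" and iota :: "'a \<Rightarrow> 'w" and d :: "'w \<Rightarrow> 'w"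
    and br :: "'w \<Rightarrow> 'w \<Rightarrow> 'w"
  assumes GA: "graded_comm_algebra Agr"
    and SF: "superform_algebra Agr wedge one Om iota d"
    and GB: "gerstenhaber_superbracket Om wedge br"
begin

lemmas SFu = SF[unfolded superform_algebra_def]
lemmas GBu = GB[unfolded gerstenhaber_superbracket_def]
lemmas wl = SFu[THEN conjunct1, rule_format]
lemmas wr = SFu[THEN conjunct2, THEN conjunct1, rule_format]
lemmas Om_sub = SFu[THEN conjunct2, THEN conjunct2, THEN conjunct2, THEN conjunct2, THEN conjunct1, rule_format]
lemma Om_dec0: "\<forall>x. \<exists>!c::nat \<times> nat \<Rightarrow> 'w. finite {rp. c rp \<noteq> 0} \<and>
            (\<forall>r p. c (r, p) \<in> Om r p) \<and> x = (\<Sum>rp\<in>{rp. c rp \<noteq> 0}. c rp)"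
  using SFu by (elim conjE) assumption
lemmas Om_dec = Om_dec0[rule_format]
lemma wedge_Om0: "(\<forall>r p s q x y. p < 2 \<longrightarrow> q < 2 \<longrightarrow> x \<in> Om r p \<longrightarrow> y \<in> Om s q \<longrightarrow>
        wedge x y \<in> Om (r + s) ((p + q) mod 2) \<and>
        wedge x y = eps (int r * int s + int p * int q) *\<^sub>R wedge y x)"
  using SFu by (elim conjE) assumption
lemmas wedge_Om = wedge_Om0[rule_format, THEN conjunct1]
lemmas il = SFu[THEN conjunct2, THEN conjunct2, THEN conjunct2, THEN conjunct2, THEN conjunct2, THEN conjunct2, THEN conjunct2, THEN conjunct2, THEN conjunct1]
lemmas ii = SFu[THEN conjunct2, THEN conjunct2, THEN conjunct2, THEN conjunct2, THEN conjunct2, THEN conjunct2, THEN conjunct2, THEN conjunct2, THEN conjunct2, THEN conjunct1]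
lemmas i1 = SFu[THEN conjunct2, THEN conjunct2, THEN conjunct2, THEN conjunct2, THEN conjunct2, THEN conjunct2, THEN conjunct2, THEN conjunct2, THEN conjunct2, THEN conjunct2, THEN conjunct1]
lemma imult0: "\<forall>a b. iota (a * b) = wedge (iota a) (iota b)" using SFu by (elim conjE) assumption
lemmas imult = imult0[rule_format]
lemma iAgr0: "\<forall>n. iota ` Agr n \<subseteq> Om 0 (par n)" using SFu by (elim conjE) assumption
lemma iAgr: "f \<in> Agr n \<Longrightarrow> iota f \<in> Om 0 (par n)" using iAgr0 by blast
lemma Om00: "\<forall>p. Om 0 p \<subseteq> range iota" using SFu by (elim conjE) assumption
lemma Om0: "Om 0 p \<subseteq> range iota" using Om00 by blast
lemmas dl = SFu[THEN conjunct2, THEN conjunct2, THEN conjunct2, THEN conjunct2, THEN conjunct2, THEN conjunct2, THEN conjunct2, THEN conjunct2, THEN conjunct2, THEN conjunct2, THEN conjunct2, THEN conjunct2, THEN conjunct2, THEN conjunct2, THEN conjunct1]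
lemma dOm0: "\<forall>r p. d ` Om r p \<subseteq> Om (Suc r) p" using SFu by (elim conjE) assumption
lemma dOm: "x \<in> Om r p \<Longrightarrow> d x \<in> Om (Suc r) p" using dOm0 by blast
lemma dd0: "\<forall>x. d (d x) = 0" using SFu by (elim conjE) assumption
lemma dd[simp]: "d (d x) = 0" using dd0 by blast
lemma dw0: "\<forall>r p x y. p < 2 \<longrightarrow> x \<in> Om r p \<longrightarrow>
        d (wedge x y) = wedge (d x) y + eps (int r) *\<^sub>R wedge x (d y)"
  using SFu by (elim conjE) assumption
lemmas dw = dw0[rule_format]
lemma genspan: "UNIV = span (range (\<lambda>(a0, as). gen_form wedge one iota d a0 as))"
  using SFu by (elim conjE) assumption

lemmas bl = GBu[THEN conjunct1, rule_format]
lemmas brl = GBu[THEN conjunct2, THEN conjunct1, rule_format]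
lemma brOm0: "\<forall>r p s q x y. bihom Om r p x \<longrightarrow> bihom Om s q y \<longrightarrow>
        (if r + s = 0 then br x y = 0 else br x y \<in> Om (r + s - 1) ((p + q) mod 2))"
  using GBu by (elim conjE) assumption
lemmas brOm = brOm0[rule_format]
lemma banti0: "\<forall>r p s q x y. bihom Om r p x \<longrightarrow> bihom Om s q y \<longrightarrow>
        br x y = - (eps ((int r - 1) * (int s - 1) + int p * int q) *\<^sub>R br y x)"
  using GBu by (elim conjE) assumption
lemmas banti = banti0[rule_format]
lemma bjac0: "\<forall>r p s q t u x y z. bihom Om r p x \<longrightarrow> bihom Om s q y \<longrightarrow> bihom Om t u z \<longrightarrow>
        br x (br y z) = br (br x y) z
          + eps ((int r - 1) * (int s - 1) + int p * int q) *\<^sub>R br y (br x z)"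
  using GBu by (elim conjE) assumption
lemmas bjac = bjac0[rule_format]
lemma bleib0: "\<forall>r p s q t u x y z. bihom Om r p x \<longrightarrow> bihom Om s q y \<longrightarrow> bihom Om t u z \<longrightarrow>
        br x (wedge y z) = wedge (br x y) z
          + eps ((int r - 1) * int s + int p * int q) *\<^sub>R wedge y (br x z)"
  using GBu by (elim conjE) assumption
lemmas bleib = bleib0[rule_format]

lemma Adec0: "\<forall>a. \<exists>!c::int \<Rightarrow> 'a. finite {n. c n \<noteq> 0} \<and> (\<forall>n. c n \<in> Agr n) \<and>
            a = (\<Sum>n\<in>{n. c n \<noteq> 0}. c n)"
  using GA unfolding graded_comm_algebra_def by (elim conjE) assumption
lemma Adec: "\<exists>c::int \<Rightarrow> 'a. finite {n. c n \<noteq> 0} \<and> (\<forall>n. c n \<in> Agr n) \<and>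
            a = (\<Sum>n\<in>{n. c n \<noteq> 0}. c n)"
  using Adec0 by metis
lemma A1: "1 \<in> Agr 0" using GA unfolding graded_comm_algebra_def by blast

lemmas lin_simps = linear_add[OF wl] linear_add[OF wr] linear_scale[OF wl] linear_scale[OF wr]
  linear_0[OF wl] linear_0[OF wr] linear_diff[OF wl] linear_diff[OF wr]
  linear_add[OF bl] linear_add[OF brl] linear_scale[OF bl] linear_scale[OF brl]
  linear_0[OF bl] linear_0[OF brl] linear_diff[OF bl] linear_diff[OF brl]
  linear_add[OF dl] linear_scale[OF dl] linear_0[OF dl] linear_diff[OF dl]
  linear_add[OF il] linear_scale[OF il] linear_0[OF il] linear_diff[OF il]
  linear_neg[OF wl] linear_neg[OF wr] linear_neg[OF bl] linear_neg[OF brl] linear_neg[OF dl] linear_neg[OF il]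

definition H where "H = (\<Union>n. Agr n)"
lemma spanH: "span H = UNIV"
proof -
  have "a \<in> span H" for a
  proof -
    obtain c where c: "finite {n. c n \<noteq> 0}" "\<forall>n. c n \<in> Agr n" "a = (\<Sum>n\<in>{n. c n \<noteq> 0}. c n)"
      using Adec by blast
    show ?thesis unfolding c(3) by (rule span_sum) (use c(2) in \<open>auto simp: H_def intro: span_base\<close>)
  qed
  then show ?thesis by auto
qed

lemma par_lt: "par n < 2" by (simp add: par_def)
lemma bh_i: "f \<in> Agr n \<Longrightarrow> bihom Om 0 (par n) (iota f)"
  by (simp add: bihom_def par_lt iAgr)
lemma bh_d: "bihom Om r p x \<Longrightarrow> bihom Om (Suc r) p (d x)"
  by (simp add: bihom_def dOm)
lemma bh_di: "f \<in> Agr n \<Longrightarrow> bihom Om 1 (par n) (d (iota f))"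
  using bh_d[OF bh_i] by simp

end

context GS begin

definition Dl where "Dl r x y = d (br x y) - br (d x) y - eps (int r - 1) *\<^sub>R br x (d y)"

lemma Dl_lin: "linear (Dl r x)"
  by (rule linearI) (simp_all add: Dl_def lin_simps algebra_simps)

lemma wedge_zero[simp]: "wedge 0 z = 0" "wedge z 0 = 0"
  by (simp_all add: lin_simps)
lemma br_zero[simp]: "br 0 z = 0" "br z 0 = 0"
  by (simp_all add: lin_simps)
lemma d_zero[simp]: "d 0 = 0" by (simp add: lin_simps)

lemma bracket_dw:
  assumes x: "bihom Om r p x" and y: "bihom Om s q y"
  shows "d (wedge (br x y) z) = wedge (d (br x y)) z + eps (int r + int s - 1) *\<^sub>R wedge (br x y) (d z)"
proof (cases "r + s = 0")
  case True
  then have "br x y = 0" using brOm[OF x y] by simp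
  then show ?thesis by simp
next
  case False
  then have m: "br x y \<in> Om (r + s - 1) ((p + q) mod 2)" using brOm[OF x y] by (simp only: False if_False)
  have "int (r + s - 1) = int r + int s - 1" using False by (cases "r + s") auto
  then show ?thesis using dw[OF _ m] by simp
qed

lemma deriv:
  assumes x: "bihom Om r p x" and y: "bihom Om s q y" and z: "bihom Om t u z"
    and Dy: "Dl r x y = 0" and Dz: "Dl r x z = 0"
  shows "Dl r x (wedge y z) = 0"
proof -
  define e where "e = eps (int r - 1)"
  have hy: "d (br x y) = br (d x) y + e *\<^sub>R br x (d y)" using Dy by (simp add: Dl_def e_def algebra_simps)
  have hz: "d (br x z) = br (d x) z + e *\<^sub>R br x (d z)" using Dz by (simp add: Dl_def e_def algebra_simps)
  have ym: "y \<in> Om s q" "q < 2" using y by (auto simp: bihom_def)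
  define Es where "Es = eps (int s)"
  define A where "A = eps ((int r - 1) * int s + int p * int q)"
  define B where "B = eps ((int r - 1) * (int s + 1) + int p * int q)"
  define C where "C = eps (int r * int s + int p * int q)"
  define F where "F = eps (int r + int s - 1)"
  have L1: "br x (wedge y z) = wedge (br x y) z + A *\<^sub>R wedge y (br x z)"
    unfolding A_def by (rule bleib[OF x y z])
  have L2: "d (wedge (br x y) z) = wedge (d (br x y)) z + F *\<^sub>R wedge (br x y) (d z)"
    unfolding F_def by (rule bracket_dw[OF x y])
  have L3: "d (wedge y (br x z)) = wedge (d y) (br x z) + Es *\<^sub>R wedge y (d (br x z))"
    unfolding Es_def using dw[OF ym(2) ym(1)] by simp
  have L4: "d (wedge y z) = wedge (d y) z + Es *\<^sub>R wedge y (d z)"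
    unfolding Es_def using dw[OF ym(2) ym(1)] by simp
  have L5: "br (d x) (wedge y z) = wedge (br (d x) y) z + C *\<^sub>R wedge y (br (d x) z)"
    unfolding C_def using bleib[OF bh_d[OF x] y z] by simp
  have L6: "br x (wedge (d y) z) = wedge (br x (d y)) z + B *\<^sub>R wedge (d y) (br x z)"
    unfolding B_def using bleib[OF x bh_d[OF y] z] by (simp add: add.commute)
  have L7: "br x (wedge y (d z)) = wedge (br x y) (d z) + A *\<^sub>R wedge y (br x (d z))"
    unfolding A_def by (rule bleib[OF x y bh_d[OF z]])
  have S1: "F = e * Es"
    unfolding e_def F_def Es_def by (auto simp: eps_def)
  have S2: "A = e * B"
    unfolding e_def A_def B_def by (auto simp: eps_def even_mult_iff)
  have S3: "C = e * B * Es"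
    unfolding e_def B_def C_def Es_def by (auto simp: eps_def even_mult_iff)
  show ?thesis
    unfolding Dl_def e_def[symmetric] L4 L1 L5
    apply (simp add: lin_simps L2 L3 L6 L7 hy hz)
    apply (simp add: S1 S2 S3 algebra_simps)
    done
qed

end

context GS begin

lemma Dl_anti:
  assumes x: "bihom Om r p x" and y: "bihom Om s q y" and D: "Dl r x y = 0"
  shows "Dl s y x = 0"
proof -
  define sg where "sg = eps ((int r - 1) * (int s - 1) + int p * int q)"
  define G where "G = eps (int r * (int s - 1) + int p * int q)"
  define K where "K = eps ((int r - 1) * int s + int p * int q)"
  have T1: "br x y = - (sg *\<^sub>R br y x)" unfolding sg_def by (rule banti[OF x y])
  have T2: "br (d x) y = - (G *\<^sub>R br y (d x))" unfolding G_def using banti[OF bh_d[OF x] y] by simp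
  have T3: "br x (d y) = - (K *\<^sub>R br (d y) x)" unfolding K_def using banti[OF x bh_d[OF y]] by simp
  have U1: "G = sg * eps (int s - 1)" unfolding G_def sg_def by (auto simp: eps_def even_mult_iff)
  have U2: "sg = eps (int r - 1) * K" unfolding K_def sg_def by (auto simp: eps_def even_mult_iff)
  have "Dl r x y = - (sg *\<^sub>R Dl s y x)"
    unfolding Dl_def T1 T2 T3 by (simp add: lin_simps U1 U2 algebra_simps)
  then have "sg *\<^sub>R Dl s y x = 0" using D by simp
  moreover have "sg \<noteq> 0" unfolding sg_def by (rule eps_nz)
  ultimately show ?thesis by simp
qed

definition gen :: "nat \<Rightarrow> nat \<Rightarrow> 'w \<Rightarrow> bool" where
  "gen r p g \<longleftrightarrow> (\<exists>n f. f \<in> Agr n \<and> p = par n \<and> ((r = 0 \<and> g = iota f) \<or> (r = 1 \<and> g = d (iota f))))"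

inductive prd :: "nat \<Rightarrow> nat \<Rightarrow> 'w \<Rightarrow> bool" where
  prd_one: "prd 0 0 one"
| prd_step: "gen r p g \<Longrightarrow> prd s q w \<Longrightarrow> prd (r + s) ((p + q) mod 2) (wedge g w)"

lemma gen_bh: "gen r p g \<Longrightarrow> bihom Om r p g"
  unfolding gen_def using bh_i bh_di by auto

lemma gen_one: "gen 0 0 one"
  unfolding gen_def using A1 i1 by (metis par_def mod_0 nat_zero_as_int)

lemma prd_bh: "prd r p w \<Longrightarrow> bihom Om r p w"
proof (induction rule: prd.induct)
  case prd_one
  then show ?case using gen_bh[OF gen_one] .
next
  case (prd_step r p g s q w)
  then show ?case using gen_bh[OF prd_step(1)] wedge_Om by (auto simp: bihom_def)
qed

lemma prd_D:
  assumes x: "bihom Om r p x" and G: "\<And>s q g. gen s q g \<Longrightarrow> Dl r x g = 0"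
  shows "prd s q w \<Longrightarrow> Dl r x w = 0"
proof (induction rule: prd.induct)
  case prd_one
  then show ?case using G[OF gen_one] .
next
  case (prd_step r' p' g s q w)
  show ?case by (rule deriv[OF x gen_bh[OF prd_step(1)] prd_bh[OF prd_step(2)] G[OF prd_step(1)] prd_step(3)])
qed

definition PR where "PR = {w. \<exists>r p. prd r p w}"

lemma gen_i: "f \<in> Agr n \<Longrightarrow> gen 0 (par n) (iota f)" unfolding gen_def by auto
lemma gen_di: "f \<in> Agr n \<Longrightarrow> gen 1 (par n) (d (iota f))" unfolding gen_def by auto
lemma PR_wedge: "gen r p g \<Longrightarrow> w \<in> PR \<Longrightarrow> wedge g w \<in> PR"
  unfolding PR_def using prd_step by blast

lemma span_PR: "span PR = UNIV"
proof -
  have i_span: "iota a \<in> span (iota ` H)" for a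
    using span_linear_image[OF il, of H] spanH by auto
  have di_span: "d (iota a) \<in> span ((d \<circ> iota) ` H)" for a
    using span_linear_image[OF linear_compose[OF il dl], of H] spanH by auto
  have W: "foldr (\<lambda>a w. wedge (d (iota a)) w) as one \<in> span PR" for as
  proof (induction as)
    case Nil
    then show ?case using prd_one by (auto simp: PR_def intro: span_base)
  next
    case (Cons a as)
    have "wedge a' b \<in> span PR" if A: "a' \<in> (d \<circ> iota) ` H" "b \<in> PR" for a' b
    proof -
      obtain f where f: "f \<in> H" "a' = d (iota f)" using A(1) by auto
      then obtain n where "f \<in> Agr n" by (auto simp: H_def)
      note f = this f(2)
      then show ?thesis using PR_wedge[OF gen_di[OF f(1)] A(2)] by (auto intro: span_base)
    qed
    then show ?case
      using bilin_span[where B=wedge, OF wl wr di_span Cons subspace_span] by simp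
  qed
  have "gen_form wedge one iota d a0 as \<in> span PR" for a0 as
  proof -
    have "wedge a' b \<in> span PR" if A: "a' \<in> iota ` H" "b \<in> PR" for a' b
    proof -
      obtain f where f: "f \<in> H" "a' = iota f" using A(1) by auto
      then obtain n where "f \<in> Agr n" by (auto simp: H_def)
      note f = this f(2)
      then show ?thesis using PR_wedge[OF gen_i[OF f(1)] A(2)] by (auto intro: span_base)
    qed
    then show ?thesis unfolding gen_form_def
      using bilin_span[where B=wedge, OF wl wr i_span W subspace_span] by simp
  qed
  then have "range (\<lambda>(a0, as). gen_form wedge one iota d a0 as) \<subseteq> span PR" by auto
  then have "span (range (\<lambda>(a0, as). gen_form wedge one iota d a0 as)) \<subseteq> span PR"
    by (simp add: span_minimal)
  then show ?thesis using genspan by auto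
qed

lemma allD:
  assumes "\<And>s q w. prd s q w \<Longrightarrow> Dl r x w = 0"
  shows "Dl r x y = 0"
proof -
  have "y \<in> span PR" using span_PR by auto
  moreover have "\<forall>w\<in>PR. Dl r x w = 0" using assms by (auto simp: PR_def)
  ultimately show ?thesis
    using linear_eq_on_span[OF Dl_lin[of r x] real_vector.linear_zero, where B=PR and x=y] by auto
qed

end

context GS begin

lemma backward:
  assumes C: "\<forall>f g. br (iota f) (iota g) = 0 \<and> br (iota f) (d (iota g)) = iota (P f g) \<and>
              br (d (iota f)) (iota g) = iota (P f g) \<and> br (d (iota f)) (d (iota g)) = d (iota (P f g))"
  shows "differential_bracket Om d br"
proof -
  have base: "Dl r g g' = 0" if "gen r p g" "gen s q g'" for r p g s q g'
    using that C unfolding gen_def Dl_def by (auto simp: eps_def)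
  have a: "Dl r g y = 0" if "gen r p g" for r p g y
    by (rule allD) (rule prd_D[OF gen_bh[OF that] base[OF that]])
  have b: "Dl s y z = 0" if y: "bihom Om s q y" for s q y z
    by (rule allD) (rule prd_D[OF y Dl_anti[OF gen_bh y a]])
  show ?thesis unfolding differential_bracket_def
  proof (intro allI impI)
    fix r p s q x y assume x: "bihom Om r p x" and "bihom Om s q y"
    from b[OF x, of y] show "d (br x y) = br (d x) y + eps (int r - 1) *\<^sub>R br x (d y)"
      by (simp add: Dl_def algebra_simps)
  qed
qed

end

context GS begin

lemma Om_disj:
  assumes "p \<noteq> p'" "v \<in> Om r p" "v \<in> Om r p'"
  shows "v = 0"
proof (rule ccontr)
  assume nz: "v \<noteq> 0"
  define Q where "Q = (\<lambda>c::nat \<times> nat \<Rightarrow> 'w. finite {rp. c rp \<noteq> 0} \<and>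
            (\<forall>r p. c (r, p) \<in> Om r p) \<and> v = (\<Sum>rp\<in>{rp. c rp \<noteq> 0}. c rp))"
  define c1 where "c1 = (\<lambda>rp. if rp = (r, p) then v else 0)"
  define c2 where "c2 = (\<lambda>rp. if rp = (r, p') then v else 0)"
  have s1: "{rp. c1 rp \<noteq> 0} = {(r, p)}" using nz by (auto simp: c1_def)
  have s2: "{rp. c2 rp \<noteq> 0} = {(r, p')}" using nz by (auto simp: c2_def)
  have "Q c1" unfolding Q_def s1 using assms(2) Om_sub subspace_0 by (auto simp: c1_def)
  moreover have "Q c2" unfolding Q_def s2 using assms(3) Om_sub subspace_0 by (auto simp: c2_def)
  moreover have "\<exists>!c. Q c" unfolding Q_def by (rule Om_dec)
  ultimately have "c1 = c2" by blast
  then have "c1 (r, p) = c2 (r, p)" by simp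
  then show False using nz assms(1) by (simp add: c1_def c2_def)
qed

lemma iota_inj: "iota a = iota b \<Longrightarrow> a = b" using ii by (simp add: inj_eq)

lemma Apar_lem:
  assumes p: "p < 2" and z: "iota z \<in> Om 0 p"
  shows "z \<in> Apar Agr p"
proof -
  obtain c where c: "finite {n. c n \<noteq> 0}" "\<forall>n. c n \<in> Agr n" "z = (\<Sum>n\<in>{n. c n \<noteq> 0}. c n)"
    using Adec by blast
  define N where "N = {n. c n \<noteq> 0}"
  define B where "B = {n. par n = p}"
  define z0 where "z0 = (\<Sum>n\<in>N \<inter> B. c n)"
  define z1 where "z1 = (\<Sum>n\<in>N - B. c n)"
  have zz: "z = z0 + z1" unfolding z0_def z1_def c(3) N_def[symmetric]
    by (rule sum.Int_Diff) (simp add: N_def c(1))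
  have z0A: "z0 \<in> Apar Agr p" unfolding z0_def Apar_def
    by (rule span_sum) (use c(2) in \<open>auto simp: B_def intro!: span_base\<close>)
  have iz0: "iota z0 \<in> Om 0 p" unfolding z0_def linear_sum[OF il]
    by (rule subspace_sum[OF Om_sub]) (use c(2) iAgr in \<open>auto simp: B_def\<close>)
  have iz1: "iota z1 \<in> Om 0 (1 - p)" unfolding z1_def linear_sum[OF il]
  proof (rule subspace_sum[OF Om_sub])
    fix n assume "n \<in> N - B"
    then have "par n = 1 - p" using par_lt[of n] p by (auto simp: B_def)
    then show "iota (c n) \<in> Om 0 (1 - p)" using iAgr c(2) by metis
  qed
  have "iota z1 = iota z - iota z0" using zz by (simp add: lin_simps)
  then have "iota z1 \<in> Om 0 p" using z iz0 subspace_diff[OF Om_sub] by simp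
  then have "iota z1 = 0" using Om_disj[OF _ _ iz1] p by (cases p) auto
  then have "z1 = 0" using iota_inj[of z1 0] by (simp add: lin_simps)
  then show ?thesis using zz z0A by simp
qed

lemma par_add: "(par m + par n) mod 2 = par (m + n)"
proof -
  have a: "m mod 2 = 0 \<or> m mod 2 = 1" by presburger
  have b: "n mod 2 = 0 \<or> n mod 2 = 1" by presburger
  have c: "(m + n) mod 2 = (m mod 2 + n mod 2) mod 2" by (simp add: mod_add_eq)
  show ?thesis unfolding par_def c using a b by auto
qed

end

context GS begin

lemma lin_B0: "linear (\<lambda>g. br (iota f) (d (iota g)))" "linear (\<lambda>f. br (iota f) (d (iota g)))"
  "linear (\<lambda>g. br (iota f) (iota g))" "linear (\<lambda>f. br (iota f) (iota g))"
  "linear (\<lambda>g. br (d (iota f)) (iota g))" "linear (\<lambda>f. br (d (iota f)) (iota g))"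
  "linear (\<lambda>g. br (d (iota f)) (d (iota g)))" "linear (\<lambda>f. br (d (iota f)) (d (iota g)))"
  "linear (\<lambda>g. d (br (iota f) (d (iota g))))" "linear (\<lambda>f. d (br (iota f) (d (iota g))))"
  by (rule linearI; simp add: lin_simps algebra_simps)+

lemma bilin_zero:
  assumes "\<And>x. linear (B x)" "\<And>y. linear (\<lambda>x. B x y)"
    and "\<And>f g m n. f \<in> Agr m \<Longrightarrow> g \<in> Agr n \<Longrightarrow> B f g = 0"
  shows "B f g = (0::'w)"
proof -
  have "B f g \<in> {0}"
    by (rule bilin_span[OF assms(1,2), of f H g H]) (use spanH assms(3) in \<open>auto simp: H_def subspace_single_0\<close>)
  then show ?thesis by simp
qed

lemma forward:
  assumes D: "differential_bracket Om d br"
  shows "\<exists>P. poisson_superalgebra Agr P \<and>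
       (\<forall>f g. br (iota f) (iota g) = 0 \<and>
              br (iota f) (d (iota g)) = iota (P f g) \<and>
              br (d (iota f)) (iota g) = iota (P f g) \<and>
              br (d (iota f)) (d (iota g)) = d (iota (P f g)))"
proof -
  have Dr: "d (br x y) = br (d x) y + eps (int r - 1) *\<^sub>R br x (d y)"
    if "bihom Om r p x" "bihom Om s q y" for r p s q x y
    using D that unfolding differential_bracket_def by blast
  have hom: "br (iota f) (d (iota g)) \<in> Om 0 (par (m + n))" if "f \<in> Agr m" "g \<in> Agr n" for f g m n
    using brOm[OF bh_i[OF that(1)] bh_di[OF that(2)]] by (simp add: par_add)
  have homR: "br (iota f) (d (iota g)) \<in> range iota" if "f \<in> Agr m" "g \<in> Agr n" for f g m n
    using hom[OF that] Om0 by blast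
  have R: "br (iota f) (d (iota g)) \<in> range iota" for f g
    by (rule bilin_span[OF lin_B0(1) lin_B0(2), of f H g H])
       (use spanH homR linear_subspace_image[OF il subspace_UNIV] in \<open>auto simp: H_def\<close>)
  define P where "P f g = inv iota (br (iota f) (d (iota g)))" for f g
  have iP: "iota (P f g) = br (iota f) (d (iota g))" for f g
    unfolding P_def using R by (simp add: f_inv_into_f)
  have Q1: "br (iota f) (iota g) = 0" for f g
    by (rule bilin_zero[OF lin_B0(3) lin_B0(4)])
       (use brOm[OF bh_i bh_i] in \<open>auto\<close>)
  have Q2h: "br (d (iota f)) (iota g) - br (iota f) (d (iota g)) = 0" if "f \<in> Agr m" "g \<in> Agr n" for f g m n
    using Dr[OF bh_i[OF that(1)] bh_i[OF that(2)]] Q1 by (simp add: eps_def)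
  have "br (d (iota f)) (iota g) - br (iota f) (d (iota g)) = 0" for f g
    by (rule bilin_zero[where B="\<lambda>f g. br (d (iota f)) (iota g) - br (iota f) (d (iota g))", OF _ _ Q2h])
       (rule linearI; simp add: lin_simps algebra_simps)+
  then have Q2: "br (d (iota f)) (iota g) = br (iota f) (d (iota g))" for f g by simp
  have Q3h: "br (d (iota f)) (d (iota g)) - d (br (iota f) (d (iota g))) = 0" if "f \<in> Agr m" "g \<in> Agr n" for f g m n
    using Dr[OF bh_i[OF that(1)] bh_di[OF that(2)]] by simp
  have "br (d (iota f)) (d (iota g)) - d (br (iota f) (d (iota g))) = 0" for f g
    by (rule bilin_zero[where B="\<lambda>f g. br (d (iota f)) (d (iota g)) - d (br (iota f) (d (iota g)))", OF _ _ Q3h])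
       (rule linearI; simp add: lin_simps algebra_simps)+
  then have Q3: "br (d (iota f)) (d (iota g)) = d (br (iota f) (d (iota g)))" for f g by simp
  have "poisson_superalgebra Agr P"
    unfolding poisson_superalgebra_def
  proof (intro conjI allI impI)
    fix f show "linear (P f)" by (rule linear_via_inj[OF il ii lin_B0(1) iP])
  next
    fix g show "linear (\<lambda>f. P f g)" by (rule linear_via_inj[OF il ii lin_B0(2)]) (rule iP)
  next
    fix m n f g assume f: "f \<in> Agr m" and g: "g \<in> Agr n"
    show "P f g \<in> Apar Agr (par (m + n))"
      by (rule Apar_lem[OF par_lt]) (use hom[OF f g] in \<open>simp add: iP\<close>)
  next
    fix m n f g assume f: "f \<in> Agr m" and g: "g \<in> Agr n"
    have "iota (P f g) = iota (- (eps (m * n) *\<^sub>R P g f))"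
      using banti[OF bh_i[OF f] bh_di[OF g]] by (simp add: iP Q2 lin_simps eps_par[of m n])
    then show "P f g = - (eps (m * n) *\<^sub>R P g f)" by (rule iota_inj)
  next
    fix m n k f g h assume f: "f \<in> Agr m" and g: "g \<in> Agr n" and h: "h \<in> Agr k"
    have "iota (P f (P g h)) = br (iota f) (br (d (iota g)) (d (iota h)))" by (simp add: iP Q3)
    also have "\<dots> = br (br (iota f) (d (iota g))) (d (iota h)) + eps (int (par m) * int (par n)) *\<^sub>R br (d (iota g)) (br (iota f) (d (iota h)))"
      using bjac[OF bh_i[OF f] bh_di[OF g] bh_di[OF h]] by simp
    also have "\<dots> = iota (P (P f g) h + eps (m * n) *\<^sub>R P g (P f h))"
      by (simp add: iP[symmetric] Q2 lin_simps eps_par[of m n])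
    finally show "P f (P g h) = P (P f g) h + eps (m * n) *\<^sub>R P g (P f h)" by (rule iota_inj)
  next
    fix m n k f g h assume f: "f \<in> Agr m" and g: "g \<in> Agr n" and h: "h \<in> Agr k"
    have "iota (P f (g * h)) = br (iota f) (wedge (d (iota g)) (iota h)) + br (iota f) (wedge (iota g) (d (iota h)))"
      using dw[OF par_lt iAgr[OF g], of "iota h"] by (simp add: iP imult lin_simps eps_def)
    also have "\<dots> = wedge (br (iota f) (d (iota g))) (iota h) + eps (int (par m) * int (par n)) *\<^sub>R wedge (iota g) (br (iota f) (d (iota h)))"
      using bleib[OF bh_i[OF f] bh_di[OF g] bh_i[OF h]] bleib[OF bh_i[OF f] bh_i[OF g] bh_di[OF h]]
      by (simp add: Q1)
    also have "\<dots> = iota (P f g * h + eps (m * n) *\<^sub>R (g * P f h))"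
      by (simp add: iP imult lin_simps eps_par[of m n])
    finally show "P f (g * h) = P f g * h + eps (m * n) *\<^sub>R (g * P f h)" by (rule iota_inj)
  qed
  then show ?thesis using Q1 Q2 Q3 iP by metis
qed

end

theorem mainTheorem6:
  fixes Agr :: "int \<Rightarrow> 'a::real_algebra_1 set"
    and wedge :: "'w::real_vector \<Rightarrow> 'w \<Rightarrow> 'w" and one :: 'w
    and Om :: "nat \<Rightarrow> nat \<Rightarrow> 'w set" and iota :: "'a \<Rightarrow> 'w" and d :: "'w \<Rightarrow> 'w"
    and br :: "'w \<Rightarrow> 'w \<Rightarrow> 'w"
  assumes "graded_comm_algebra Agr"
    and "superform_algebra Agr wedge one Om iota d"
    and "gerstenhaber_superbracket Om wedge br"
  shows "differential_bracket Om d br \<longleftrightarrow>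
    (\<exists>P. poisson_superalgebra Agr P \<and>
       (\<forall>f g. br (iota f) (iota g) = 0 \<and>
              br (iota f) (d (iota g)) = iota (P f g) \<and>
              br (d (iota f)) (iota g) = iota (P f g) \<and>
              br (d (iota f)) (d (iota g)) = d (iota (P f g))))"
proof -
  interpret GS Agr wedge one Om iota d br using assms by unfold_locales
  show ?thesis
  proof
    assume "differential_bracket Om d br"
    then show "\<exists>P. poisson_superalgebra Agr P \<and>
       (\<forall>f g. br (iota f) (iota g) = 0 \<and>
              br (iota f) (d (iota g)) = iota (P f g) \<and>
              br (d (iota f)) (iota g) = iota (P f g) \<and>
              br (d (iota f)) (d (iota g)) = d (iota (P f g)))" by (rule forward)
  next
    assume "\<exists>P. poisson_superalgebra Agr P \<and>
       (\<forall>f g. br (iota f) (iota g) = 0 \<and>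
              br (iota f) (d (iota g)) = iota (P f g) \<and>
              br (d (iota f)) (iota g) = iota (P f g) \<and>
              br (d (iota f)) (d (iota g)) = d (iota (P f g)))"
    then obtain P where "\<forall>f g. br (iota f) (iota g) = 0 \<and>
              br (iota f) (d (iota g)) = iota (P f g) \<and>
              br (d (iota f)) (iota g) = iota (P f g) \<and>
              br (d (iota f)) (d (iota g)) = d (iota (P f g))" by blast
    then show "differential_bracket Om d br" by (rule backward)
  qed
qed

end
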